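(* Let $a,b,c,d\in\mathbb R$, $\delta:=c+d-a-b$, and assume $a,b,\delta>0$ and $d-a,\ d-b,\ c+1-a,\ c-b\notin\{0,-1,-2,\dots\}$. Let $q^{(n)}$, $n\ge 0$, be the type I linear forms defined in the context. Then for every integer $n\ge 0$, $$q^{(2n)}(1)=\frac{1}{(2n)!}\,\frac{(c)_{3n}(d)_{3n}}{(a)_{2n}(b)_{2n}},\qquad q^{(2n+1)}(1)=\frac{1}{(2n+1)!}\,\frac{(c)_{3n+2}(d)_{3n+1}}{(a)_{2n+1}(b)_{2n+1}}.$$
   Context: $(x)_k=x(x+1)\cdots(x+k-1)$, $(x)_0=1$, and ${}_2F_1$ is the Gauss hypergeometric function. On $(0,1)$ define $w_1(x)={}_2F_1(c-b,d-b;\delta;1-x)$, $w_2(x)=\frac{c}{b}\,{}_2F_1(c-b,d-b-1;\delta;1-x)$ (both extend continuously to $x=1$ with value $1$, resp. $c/b$), and $d\mu(x)=\frac{\Gamma(c)\Gamma(d)}{\Gamma(a)\Gamma(b)\Gamma(\delta)}x^{a-1}(1-x)^{\delta-1}dx$. Under the assumptions, for each $n\ge0$ there are unique polynomials $A_1^{(n)},A_2^{(n)}$ with $\deg A_1^{(n)}\le\lfloor n/2\rfloor$, $\deg A_2^{(n)}\le\lfloor (n-1)/2\rfloor$ ($A_2^{(0)}=0$) such that $q^{(n)}:=A_1^{(n)}w_1+A_2^{(n)}w_2$ satisfies $\int_0^1x^kq^{(n)}(x)\,d\mu(x)=0$ for $0\le k\le n-1$ and $\int_0^1x^nq^{(n)}(x)\,d\mu(x)=1$.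 $q^{(n)}(1)$ means $A_1^{(n)}(1)w_1(1)+A_2^{(n)}(1)w_2(1)$. *)

theory Defs
  imports "HOL-Analysis.Analysis" "HOL-Computational_Algebra.Polynomial"
begin

text \<open>Gauss hypergeometric function 2F1(a,b;c;z), as its power series
  (used here only for 0 <= z < 1, where it converges).\<close>
definition hyp2F1 :: "real \<Rightarrow> real \<Rightarrow> real \<Rightarrow> real \<Rightarrow> real" where
  "hyp2F1 a b c z =
     (\<Sum>k. pochhammer a k * pochhammer b k / (pochhammer c k * fact k) * z ^ k)"

definition not_nonpos_int :: "real \<Rightarrow> bool" where
  "not_nonpos_int x \<longleftrightarrow> (\<forall>k::nat. x \<noteq> - real k)"

definition w1 :: "real \<Rightarrow> real \<Rightarrow> real \<Rightarrow> real \<Rightarrow> real \<Rightarrow> real" where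
  "w1 a b c d x = hyp2F1 (c - b) (d - b) (c + d - a - b) (1 - x)"

definition w2 :: "real \<Rightarrow> real \<Rightarrow> real \<Rightarrow> real \<Rightarrow> real \<Rightarrow> real" where
  "w2 a b c d x = c / b * hyp2F1 (c - b) (d - b - 1) (c + d - a - b) (1 - x)"

definition mu_density :: "real \<Rightarrow> real \<Rightarrow> real \<Rightarrow> real \<Rightarrow> real \<Rightarrow> real" where
  "mu_density a b c d x =
     Gamma c * Gamma d / (Gamma a * Gamma b * Gamma (c + d - a - b))
     * x powr (a - 1) * (1 - x) powr (c + d - a - b - 1)"

definition lin_form :: "real \<Rightarrow> real \<Rightarrow> real \<Rightarrow> real \<Rightarrow> real poly \<Rightarrow> real poly \<Rightarrow> real \<Rightarrow> real" where
  "lin_form a b c d A1 A2 x = poly A1 x * w1 a b c d x + poly A2 x * w2 a b c d x"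

definition typeI :: "real \<Rightarrow> real \<Rightarrow> real \<Rightarrow> real \<Rightarrow> nat \<Rightarrow> real poly \<Rightarrow> real poly \<Rightarrow> bool" where
  "typeI a b c d n A1 A2 \<longleftrightarrow>
     degree A1 \<le> n div 2 \<and>
     (if n = 0 then A2 = 0 else degree A2 \<le> (n - 1) div 2) \<and>
     (\<forall>k<n. (LINT x:{0<..<1}|lborel. x ^ k * lin_form a b c d A1 A2 x * mu_density a b c d x) = 0) \<and>
     (LINT x:{0<..<1}|lborel. x ^ n * lin_form a b c d A1 A2 x * mu_density a b c d x) = 1"

end

theory Submission
  imports Defs "HOL-Real_Asymp.Real_Asymp"
begin


definition hs :: "real \<Rightarrow> real \<Rightarrow> real \<Rightarrow> nat \<Rightarrow> real" where
  "hs \<alpha> \<beta> \<gamma> j = pochhammer \<alpha> j * pochhammer \<beta> j / (pochhammer \<gamma> j * fact j)"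

lemma poch_pos: "(g::real) > 0 \<Longrightarrow> pochhammer g n > 0"
  by (simp add: pochhammer_pos)

lemma rGS_eq:
  assumes "n > 0"
  shows "pochhammer (z::real) (Suc n) = rGamma_series z n * fact n * real n powr z"
  using assms by (simp add: rGamma_series_def powr_def)

lemma hs_Suc_bound:
  assumes g: "\<gamma> > 0"
  shows "\<exists>B. \<forall>n>0. \<bar>hs \<alpha> \<beta> \<gamma> (Suc n)\<bar> * (real n + 1) \<le> B * real n powr (\<alpha> + \<beta> - \<gamma>)"
proof -
  define Q where "Q n = rGamma_series \<alpha> n * rGamma_series \<beta> n / rGamma_series \<gamma> n" for n
  have "Q \<longlonglongrightarrow> rGamma \<alpha> * rGamma \<beta> / rGamma \<gamma>"
    unfolding Q_def using g by (intro tendsto_intros) (auto simp: rGamma_eq_zero_iff)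
  then have "Bseq Q" by (rule convergent_imp_Bseq[OF convergentI])
  then obtain B where B: "\<And>n. norm (Q n) \<le> B" by (auto simp: Bseq_def)
  show ?thesis
  proof (intro exI allI impI)
    fix n :: nat assume n: "n > 0"
    have pg: "pochhammer \<gamma> (Suc n) > 0" using g by (rule poch_pos)
    have rg: "rGamma_series \<gamma> n \<noteq> 0" using pg rGS_eq[OF n, of \<gamma>] by auto
    have "hs \<alpha> \<beta> \<gamma> (Suc n) * (real n + 1) = Q n * real n powr (\<alpha> + \<beta> - \<gamma>)"
    proof -
      have e: "real n powr (\<alpha> + \<beta> - \<gamma>) = real n powr \<alpha> * real n powr \<beta> / real n powr \<gamma>"
        using n by (simp add: powr_add powr_diff)
      have f: "fact (Suc n) = (real n + 1) * (fact n :: real)" by (simp add: algebra_simps)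
      have pos: "real n powr \<gamma> > 0" "(fact n :: real) > 0" using n by auto
      have nz: "real n + 1 \<noteq> 0" "rGamma_series \<gamma> n * fact n * real n powr \<gamma> \<noteq> 0"
        using rg pos by auto
      show ?thesis unfolding hs_def Q_def rGS_eq[OF n] e f using rg pos nz
        by (simp add: divide_simps)
    qed
    then have "\<bar>hs \<alpha> \<beta> \<gamma> (Suc n)\<bar> * (real n + 1) = \<bar>Q n\<bar> * real n powr (\<alpha> + \<beta> - \<gamma>)"
      by (metis (no_types, lifting) abs_mult abs_of_nonneg powr_ge_zero of_nat_0_le_iff add_nonneg_nonneg zero_le_one)
    also have "\<dots> \<le> B * real n powr (\<alpha> + \<beta> - \<gamma>)"
      using B[of n] by (intro mult_right_mono) auto
    finally show "\<bar>hs \<alpha> \<beta> \<gamma> (Suc n)\<bar> * (real n + 1) \<le> B * real n powr (\<alpha> + \<beta> - \<gamma>)" .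
  qed
qed

lemma hs_summable_lim:
  assumes g: "\<gamma> > 0" and s: "\<gamma> - \<alpha> - \<beta> > 0"
  shows "summable (\<lambda>j. \<bar>hs \<alpha> \<beta> \<gamma> j\<bar>)" and "(\<lambda>j. real j * hs \<alpha> \<beta> \<gamma> j) \<longlonglongrightarrow> 0"
proof -
  obtain B where B: "\<And>n. n > 0 \<Longrightarrow> \<bar>hs \<alpha> \<beta> \<gamma> (Suc n)\<bar> * (real n + 1) \<le> B * real n powr (\<alpha> + \<beta> - \<gamma>)"
    using hs_Suc_bound[OF g] by blast
  have B0: "B \<ge> 0"
  proof -
    have "0 \<le> \<bar>hs \<alpha> \<beta> \<gamma> (Suc 1)\<bar> * (real 1 + 1)" by simp
    also have "\<dots> \<le> B * real 1 powr (\<alpha> + \<beta> - \<gamma>)" using B[of 1] by simp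
    finally show ?thesis by simp
  qed
  have ev: "\<forall>\<^sub>F n in sequentially. norm (\<bar>hs \<alpha> \<beta> \<gamma> (Suc n)\<bar>) \<le> B * real n powr (\<alpha> + \<beta> - \<gamma> - 1)"
    using eventually_gt_at_top[of "0::nat"]
  proof eventually_elim
    case (elim n)
    have "\<bar>hs \<alpha> \<beta> \<gamma> (Suc n)\<bar> * real n \<le> \<bar>hs \<alpha> \<beta> \<gamma> (Suc n)\<bar> * (real n + 1)" by (intro mult_left_mono) auto
    also have "\<dots> \<le> B * real n powr (\<alpha> + \<beta> - \<gamma>)" using B elim by auto
    also have "\<dots> = B * real n powr (\<alpha> + \<beta> - \<gamma> - 1) * real n" using elim
      by (simp add: powr_diff)
    finally show ?case using elim by simp
  qed
  have "summable (\<lambda>n. B * real n powr (\<alpha> + \<beta> - \<gamma> - 1))"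
    using s by (intro summable_mult) (simp add: summable_real_powr_iff)
  then have "summable (\<lambda>n. \<bar>hs \<alpha> \<beta> \<gamma> (Suc n)\<bar>)" by (rule summable_comparison_test_ev[OF ev])
  then show "summable (\<lambda>j. \<bar>hs \<alpha> \<beta> \<gamma> j\<bar>)" by (subst summable_Suc_iff[symmetric])
  have ev2: "\<forall>\<^sub>F n in sequentially. norm (real (Suc n) * hs \<alpha> \<beta> \<gamma> (Suc n)) \<le> B * real n powr (\<alpha> + \<beta> - \<gamma>)"
    using eventually_gt_at_top[of "0::nat"]
  proof eventually_elim
    case (elim n)
    have "norm (real (Suc n) * hs \<alpha> \<beta> \<gamma> (Suc n)) = \<bar>hs \<alpha> \<beta> \<gamma> (Suc n)\<bar> * (real n + 1)"
      by (simp add: abs_mult)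
    then show ?case using B[OF elim] by simp
  qed
  have "(\<lambda>n. real n powr (\<alpha> + \<beta> - \<gamma>)) \<longlonglongrightarrow> 0"
    using s by (intro tendsto_neg_powr filterlim_real_sequentially) auto
  then have "(\<lambda>n. B * real n powr (\<alpha> + \<beta> - \<gamma>)) \<longlonglongrightarrow> 0"
    using tendsto_mult_right_zero by blast
  then have "(\<lambda>n. real (Suc n) * hs \<alpha> \<beta> \<gamma> (Suc n)) \<longlonglongrightarrow> 0"
    by (rule Lim_null_comparison[OF ev2])
  then show "(\<lambda>j. real j * hs \<alpha> \<beta> \<gamma> j) \<longlonglongrightarrow> 0" by (rule LIMSEQ_imp_Suc)
qed

lemma hs_summable:
  assumes g: "\<gamma> > 0" and s: "\<gamma> - \<alpha> - \<beta> > 0"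
  shows "summable (hs \<alpha> \<beta> \<gamma>)"
  using hs_summable_lim(1)[OF assms] summable_rabs_cancel by blast

lemma hs_rec:
  assumes g: "\<gamma> > 0"
  shows "hs \<alpha> \<beta> (\<gamma>+1) j * (\<gamma> + j) = \<gamma> * hs \<alpha> \<beta> \<gamma> j"
    and "hs \<alpha> \<beta> \<gamma> (Suc j) * (\<gamma> + j) * (j + 1) = hs \<alpha> \<beta> \<gamma> j * (\<alpha> + j) * (\<beta> + j)"
proof -
  have p: "pochhammer \<gamma> j > 0" "pochhammer (\<gamma>+1) j > 0" "\<gamma> + j > 0" "(fact j::real) > 0" using g by (auto intro: poch_pos)
  have e: "pochhammer (\<gamma>+1) j * \<gamma> = pochhammer \<gamma> j * (\<gamma> + j)"
    by (metis mult.commute pochhammer_rec pochhammer_rec')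
  have e2: "pochhammer (\<gamma>+1) j = pochhammer \<gamma> j * (\<gamma> + j) / \<gamma>" using e g by (simp add: field_simps)
  show "hs \<alpha> \<beta> (\<gamma>+1) j * (\<gamma> + j) = \<gamma> * hs \<alpha> \<beta> \<gamma> j"
    unfolding hs_def e2 using p g by (simp add: divide_simps)
  have f: "fact (Suc j) = (real j + 1) * (fact j :: real)" by (simp add: algebra_simps)
  show "hs \<alpha> \<beta> \<gamma> (Suc j) * (\<gamma> + j) * (j + 1) = hs \<alpha> \<beta> \<gamma> j * (\<alpha> + j) * (\<beta> + j)"
    unfolding hs_def pochhammer_rec' f using p by (simp add: divide_simps)
qed

lemma hs_contig_term:
  assumes g: "\<gamma> > 0"
  shows "\<gamma>*(\<gamma>-\<alpha>-\<beta>)*hs \<alpha> \<beta> \<gamma> j - (\<gamma>-\<alpha>)*(\<gamma>-\<beta>)*hs \<alpha> \<beta> (\<gamma>+1) j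
         = \<gamma>*real j*hs \<alpha> \<beta> \<gamma> j - \<gamma>*real (Suc j)*hs \<alpha> \<beta> \<gamma> (Suc j)"
proof -
  have gj: "\<gamma> + real j > 0" using g by simp
  have e1: "hs \<alpha> \<beta> (\<gamma>+1) j = \<gamma> * hs \<alpha> \<beta> \<gamma> j / (\<gamma> + j)"
    using hs_rec(1)[OF g, of \<alpha> \<beta> j] gj by (simp add: field_simps)
  have e2: "hs \<alpha> \<beta> \<gamma> (Suc j) = hs \<alpha> \<beta> \<gamma> j * (\<alpha> + j) * (\<beta> + j) / ((\<gamma> + j) * (j + 1))"
  proof -
    have nz: "(\<gamma> + real j) * (real j + 1) \<noteq> 0" using gj by auto
    show ?thesis using hs_rec(2)[OF g, of \<alpha> \<beta> j] nz by (simp add: eq_divide_eq mult.assoc)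
  qed
  show ?thesis unfolding e1 e2 using gj
    by (simp add: divide_simps) (simp add: algebra_simps)
qed

definition FF :: "real \<Rightarrow> real \<Rightarrow> real \<Rightarrow> real" where
  "FF \<alpha> \<beta> \<gamma> = suminf (hs \<alpha> \<beta> \<gamma>)"

lemma FF_contig:
  assumes g: "\<gamma> > 0" and s: "\<gamma> - \<alpha> - \<beta> > 0"
  shows "\<gamma>*(\<gamma>-\<alpha>-\<beta>)*FF \<alpha> \<beta> \<gamma> = (\<gamma>-\<alpha>)*(\<gamma>-\<beta>)*FF \<alpha> \<beta> (\<gamma>+1)"
proof -
  define e where "e j = \<gamma>*real j*hs \<alpha> \<beta> \<gamma> j" for j
  have "e \<longlonglongrightarrow> \<gamma> * 0" unfolding e_def mult.assoc
    by (intro tendsto_mult tendsto_const hs_summable_lim(2)[OF g s])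
  then have t: "(\<lambda>n. e n - e (Suc n)) sums (e 0 - 0)" using telescope_sums' by fastforce
  have s1: "summable (hs \<alpha> \<beta> \<gamma>)" by (rule hs_summable[OF g s])
  have s2: "summable (hs \<alpha> \<beta> (\<gamma>+1))" by (rule hs_summable) (use g s in auto)
  have "(\<lambda>j. \<gamma>*(\<gamma>-\<alpha>-\<beta>)*hs \<alpha> \<beta> \<gamma> j - (\<gamma>-\<alpha>)*(\<gamma>-\<beta>)*hs \<alpha> \<beta> (\<gamma>+1) j) sums
        (\<gamma>*(\<gamma>-\<alpha>-\<beta>)*FF \<alpha> \<beta> \<gamma> - (\<gamma>-\<alpha>)*(\<gamma>-\<beta>)*FF \<alpha> \<beta> (\<gamma>+1))"
    unfolding FF_def by (intro sums_diff sums_mult summable_sums s1 s2)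
  moreover have "(\<lambda>j. \<gamma>*(\<gamma>-\<alpha>-\<beta>)*hs \<alpha> \<beta> \<gamma> j - (\<gamma>-\<alpha>)*(\<gamma>-\<beta>)*hs \<alpha> \<beta> (\<gamma>+1) j) = (\<lambda>n. e n - e (Suc n))"
    unfolding e_def using hs_contig_term[OF g] by presburger
  ultimately have "(\<gamma>*(\<gamma>-\<alpha>-\<beta>)*FF \<alpha> \<beta> \<gamma> - (\<gamma>-\<alpha>)*(\<gamma>-\<beta>)*FF \<alpha> \<beta> (\<gamma>+1)) = e 0 - 0"
    using t sums_unique2 by metis
  then show ?thesis by (simp add: e_def)
qed

lemma FF_iter:
  assumes g: "\<gamma> > 0" and s: "\<gamma> - \<alpha> - \<beta> > 0"
  shows "FF \<alpha> \<beta> \<gamma> * (pochhammer \<gamma> M * pochhammer (\<gamma>-\<alpha>-\<beta>) M)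
         = pochhammer (\<gamma>-\<alpha>) M * pochhammer (\<gamma>-\<beta>) M * FF \<alpha> \<beta> (\<gamma> + real M)"
proof (induction M)
  case 0
  then show ?case by simp
next
  case (Suc M)
  have c: "(\<gamma>+M)*((\<gamma>+M)-\<alpha>-\<beta>)*FF \<alpha> \<beta> (\<gamma>+M) = ((\<gamma>+M)-\<alpha>)*((\<gamma>+M)-\<beta>)*FF \<alpha> \<beta> ((\<gamma>+M)+1)"
    by (rule FF_contig) (use g s in auto)
  have "FF \<alpha> \<beta> \<gamma> * (pochhammer \<gamma> (Suc M) * pochhammer (\<gamma>-\<alpha>-\<beta>) (Suc M))
      = (FF \<alpha> \<beta> \<gamma> * (pochhammer \<gamma> M * pochhammer (\<gamma>-\<alpha>-\<beta>) M)) * ((\<gamma>+M)*((\<gamma>+M)-\<alpha>-\<beta>))"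
    by (simp add: pochhammer_rec' algebra_simps)
  also have "\<dots> = pochhammer (\<gamma>-\<alpha>) M * pochhammer (\<gamma>-\<beta>) M * ((\<gamma>+M)*((\<gamma>+M)-\<alpha>-\<beta>) * FF \<alpha> \<beta> (\<gamma> + real M))"
    using Suc.IH by (simp add: algebra_simps)
  also have "\<dots> = pochhammer (\<gamma>-\<alpha>) (Suc M) * pochhammer (\<gamma>-\<beta>) (Suc M) * FF \<alpha> \<beta> (\<gamma> + real (Suc M))"
    unfolding c by (simp add: pochhammer_rec' algebra_simps)
  finally show ?case .
qed

lemma poch_ratio_le:
  assumes g: "\<gamma> > 0" and j: "j \<ge> 1"
  shows "pochhammer \<gamma> j / pochhammer (\<gamma> + real M) j \<le> \<gamma> / (\<gamma> + real M)"
  using j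
proof (induction j)
  case 0 then show ?case by simp
next
  case (Suc j)
  show ?case
  proof (cases "j = 0")
    case True then show ?thesis by simp
  next
    case False
    then have IH: "pochhammer \<gamma> j / pochhammer (\<gamma> + real M) j \<le> \<gamma> / (\<gamma> + real M)" using Suc by simp
    have p: "pochhammer (\<gamma> + real M) j > 0" "pochhammer \<gamma> j > 0" using g by (auto intro: poch_pos)
    have "pochhammer \<gamma> (Suc j) / pochhammer (\<gamma> + real M) (Suc j)
        = (pochhammer \<gamma> j / pochhammer (\<gamma> + real M) j) * ((\<gamma> + j) / (\<gamma> + M + j))"
      by (simp add: pochhammer_rec' field_simps)
    also have "\<dots> \<le> (\<gamma> / (\<gamma> + real M)) * 1"
      using IH g p by (intro mult_mono) (auto simp: divide_simps)
    finally show ?thesis by simp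
  qed
qed

lemma FF_lim1:
  assumes g: "\<gamma> > 0" and s: "\<gamma> - \<alpha> - \<beta> > 0"
  shows "(\<lambda>M. FF \<alpha> \<beta> (\<gamma> + real M)) \<longlonglongrightarrow> 1"
proof -
  define S where "S = (\<Sum>j. \<bar>hs \<alpha> \<beta> \<gamma> (Suc j)\<bar>)"
  have sa: "summable (\<lambda>j. \<bar>hs \<alpha> \<beta> \<gamma> (Suc j)\<bar>)"
    using hs_summable_lim(1)[OF g s] by (subst summable_Suc_iff)
  have bound: "\<bar>FF \<alpha> \<beta> (\<gamma> + real M) - 1\<bar> \<le> \<gamma> / (\<gamma> + real M) * S" for M
  proof -
    have gM: "\<gamma> + real M > 0" using g by simp
    have sM: "summable (hs \<alpha> \<beta> (\<gamma> + real M))" by (rule hs_summable) (use g s in auto)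
    have tb: "\<bar>hs \<alpha> \<beta> (\<gamma> + real M) (Suc j)\<bar> \<le> \<gamma> / (\<gamma> + real M) * \<bar>hs \<alpha> \<beta> \<gamma> (Suc j)\<bar>" for j
    proof -
      have p: "pochhammer (\<gamma> + real M) (Suc j) > 0" "pochhammer \<gamma> (Suc j) > 0" using g by (auto intro: poch_pos)
      have "hs \<alpha> \<beta> (\<gamma> + real M) (Suc j) = hs \<alpha> \<beta> \<gamma> (Suc j) * (pochhammer \<gamma> (Suc j) / pochhammer (\<gamma> + real M) (Suc j))"
        unfolding hs_def using p by (simp add: divide_simps del: fact_Suc)
      then have "\<bar>hs \<alpha> \<beta> (\<gamma> + real M) (Suc j)\<bar> = \<bar>hs \<alpha> \<beta> \<gamma> (Suc j)\<bar> * (pochhammer \<gamma> (Suc j) / pochhammer (\<gamma> + real M) (Suc j))"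
        using p by (simp add: abs_mult)
      also have "\<dots> \<le> \<bar>hs \<alpha> \<beta> \<gamma> (Suc j)\<bar> * (\<gamma> / (\<gamma> + real M))"
        by (intro mult_left_mono poch_ratio_le g) auto
      finally show ?thesis by (simp add: mult.commute)
    qed
    have sM': "summable (\<lambda>j. hs \<alpha> \<beta> (\<gamma> + real M) (Suc j))" using sM by (subst summable_Suc_iff)
    have sMa: "summable (\<lambda>j. \<bar>hs \<alpha> \<beta> (\<gamma> + real M) (Suc j)\<bar>)"
      by (rule summable_comparison_test[OF _ summable_mult[OF sa, of "\<gamma> / (\<gamma> + real M)"]]) (use tb in auto)
    have "FF \<alpha> \<beta> (\<gamma> + real M) = hs \<alpha> \<beta> (\<gamma> + real M) 0 + (\<Sum>j. hs \<alpha> \<beta> (\<gamma> + real M) (Suc j))"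
      unfolding FF_def using suminf_split_head[OF sM] by simp
    then have "FF \<alpha> \<beta> (\<gamma> + real M) - 1 = (\<Sum>j. hs \<alpha> \<beta> (\<gamma> + real M) (Suc j))"
      by (simp add: hs_def)
    then have "\<bar>FF \<alpha> \<beta> (\<gamma> + real M) - 1\<bar> \<le> (\<Sum>j. \<bar>hs \<alpha> \<beta> (\<gamma> + real M) (Suc j)\<bar>)"
      using summable_rabs[OF sMa] by simp
    also have "\<dots> \<le> (\<Sum>j. \<gamma> / (\<gamma> + real M) * \<bar>hs \<alpha> \<beta> \<gamma> (Suc j)\<bar>)"
      by (intro suminf_le tb sMa summable_mult sa)
    also have "\<dots> = \<gamma> / (\<gamma> + real M) * S" unfolding S_def by (rule suminf_mult[OF sa])
    finally show ?thesis .
  qed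
  have "(\<lambda>M. \<gamma> / (\<gamma> + real M)) \<longlonglongrightarrow> 0"
  proof -
    have "filterlim (\<lambda>M. \<gamma> + real M) at_top sequentially"
      by (intro filterlim_tendsto_add_at_top[OF tendsto_const] filterlim_real_sequentially)
    then show ?thesis by (intro tendsto_divide_0[OF tendsto_const] filterlim_at_top_imp_at_infinity)

  qed
  then have "(\<lambda>M. \<gamma> / (\<gamma> + real M) * S) \<longlonglongrightarrow> 0" using tendsto_mult_left_zero by blast
  then have "(\<lambda>M. FF \<alpha> \<beta> (\<gamma> + real M) - 1) \<longlonglongrightarrow> 0"
    by (rule Lim_null_comparison[rotated]) (use bound in auto)
  then show ?thesis by (rule LIM_zero_cancel)
qed

lemma gauss:
  assumes g: "\<gamma> > 0" and s: "\<gamma> - \<alpha> - \<beta> > 0"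
  shows "FF \<alpha> \<beta> \<gamma> = rGamma (\<gamma>-\<alpha>) * rGamma (\<gamma>-\<beta>) / (rGamma \<gamma> * rGamma (\<gamma>-\<alpha>-\<beta>))"
proof -
  define \<sigma> where "\<sigma> = \<gamma>-\<alpha>-\<beta>"
  have sp: "\<sigma> > 0" using s by (simp add: \<sigma>_def)
  define Q where "Q n = rGamma_series (\<gamma>-\<alpha>) n * rGamma_series (\<gamma>-\<beta>) n / (rGamma_series \<gamma> n * rGamma_series \<sigma> n)" for n
  have lim: "(\<lambda>n. Q n * FF \<alpha> \<beta> (\<gamma> + real (Suc n))) \<longlonglongrightarrow>
      rGamma (\<gamma>-\<alpha>) * rGamma (\<gamma>-\<beta>) / (rGamma \<gamma> * rGamma \<sigma>) * 1"
    unfolding Q_def using g sp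
    by (intro tendsto_intros LIMSEQ_Suc[OF FF_lim1[OF g s]]) (auto simp: rGamma_eq_zero_iff)
  have ev: "\<forall>\<^sub>F n in sequentially. Q n * FF \<alpha> \<beta> (\<gamma> + real (Suc n)) = FF \<alpha> \<beta> \<gamma>"
    using eventually_gt_at_top[of "0::nat"]
  proof eventually_elim
    case (elim n)
    have p: "pochhammer \<gamma> (Suc n) > 0" "pochhammer \<sigma> (Suc n) > 0" using g sp by (auto intro: poch_pos)
    have it: "FF \<alpha> \<beta> \<gamma> * (pochhammer \<gamma> (Suc n) * pochhammer \<sigma> (Suc n))
         = pochhammer (\<gamma>-\<alpha>) (Suc n) * pochhammer (\<gamma>-\<beta>) (Suc n) * FF \<alpha> \<beta> (\<gamma> + real (Suc n))"
      using FF_iter[OF g s, of "Suc n"] by (simp add: \<sigma>_def)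
    have pw: "real n powr (\<gamma>-\<alpha>) * real n powr (\<gamma>-\<beta>) = real n powr \<gamma> * real n powr \<sigma>"
      by (simp add: powr_add[symmetric] \<sigma>_def algebra_simps)
    have rg: "rGamma_series \<gamma> n \<noteq> 0" "rGamma_series \<sigma> n \<noteq> 0"
      using p rGS_eq[OF elim, of \<gamma>] rGS_eq[OF elim, of \<sigma>] by auto
    have pos: "real n powr \<gamma> > 0" "real n powr \<sigma> > 0" "(fact n :: real) > 0" using elim by auto
    have "Q n = pochhammer (\<gamma>-\<alpha>) (Suc n) * pochhammer (\<gamma>-\<beta>) (Suc n) / (pochhammer \<gamma> (Suc n) * pochhammer \<sigma> (Suc n))"
    proof -
      have "pochhammer (\<gamma>-\<alpha>) (Suc n) * pochhammer (\<gamma>-\<beta>) (Suc n) / (pochhammer \<gamma> (Suc n) * pochhammer \<sigma> (Suc n))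
         = (rGamma_series (\<gamma>-\<alpha>) n * rGamma_series (\<gamma>-\<beta>) n * (fact n * fact n) * (real n powr (\<gamma>-\<alpha>) * real n powr (\<gamma>-\<beta>)))
           / (rGamma_series \<gamma> n * rGamma_series \<sigma> n * (fact n * fact n) * (real n powr \<gamma> * real n powr \<sigma>))"
        unfolding rGS_eq[OF elim] by (simp add: algebra_simps)
      also have "\<dots> = Q n" unfolding pw Q_def using rg pos by (simp add: divide_simps)
      finally show ?thesis by simp
    qed
    then have "Q n * FF \<alpha> \<beta> (\<gamma> + real (Suc n)) = (pochhammer (\<gamma>-\<alpha>) (Suc n) * pochhammer (\<gamma>-\<beta>) (Suc n) * FF \<alpha> \<beta> (\<gamma> + real (Suc n))) / (pochhammer \<gamma> (Suc n) * pochhammer \<sigma> (Suc n))"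
      by simp
    also have "\<dots> = FF \<alpha> \<beta> \<gamma> * (pochhammer \<gamma> (Suc n) * pochhammer \<sigma> (Suc n)) / (pochhammer \<gamma> (Suc n) * pochhammer \<sigma> (Suc n))"
      by (simp only: it)
    also have "\<dots> = FF \<alpha> \<beta> \<gamma>" using p by simp
    finally show ?case .
  qed
  have "(\<lambda>n. Q n * FF \<alpha> \<beta> (\<gamma> + real (Suc n))) \<longlonglongrightarrow> FF \<alpha> \<beta> \<gamma>"
    by (rule tendsto_eventually[OF ev])
  with lim have "FF \<alpha> \<beta> \<gamma> = rGamma (\<gamma>-\<alpha>) * rGamma (\<gamma>-\<beta>) / (rGamma \<gamma> * rGamma \<sigma>) * 1"
    using LIMSEQ_unique by blast
  then show ?thesis by (simp add: \<sigma>_def)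
qed



lemma ratio_lim: "(\<lambda>n. (\<alpha> + real n) * (\<beta> + real n) / ((\<delta> + real n) * (real n + 1))) \<longlonglongrightarrow> 1"
  by real_asymp

lemma beta_Ioo:
  assumes p: "p > 0" and q: "q > (0::real)"
  shows "set_integrable lborel {0<..<1} (\<lambda>x. x powr (p-1) * (1-x) powr (q-1))"
    and "(LINT x:{0<..<1}|lborel. x powr (p-1) * (1-x) powr (q-1)) = Beta p q"
proof -
  have I: "set_integrable lborel {0..1} (\<lambda>x. x powr (p-1) * (1-x) powr (q-1))"
    by (rule integrable_Beta[OF p q])
  show "set_integrable lborel {0<..<1} (\<lambda>x. x powr (p-1) * (1-x) powr (q-1))"
    by (rule set_integrable_subset[OF I]) auto
  have "(LINT x:{0<..<1}|lborel. x powr (p-1) * (1-x) powr (q-1)) = (LINT x:{0..1}|lborel. x powr (p-1) * (1-x) powr (q-1))"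
  proof (rule set_integral_cong_set)
    show "set_borel_measurable lborel {0..1} (\<lambda>x. x powr (p-1) * (1-x) powr (q-1))"
      unfolding set_borel_measurable_def by measurable
    show "set_borel_measurable lborel {0<..<1} (\<lambda>x. x powr (p-1) * (1-x) powr (q-1))"
      unfolding set_borel_measurable_def by measurable
    show "AE x in lborel. ((x::real) \<in> {0..1}) = (x \<in> {0<..<1})"
      using AE_lborel_singleton[of "0::real"] AE_lborel_singleton[of "1::real"]
      by eventually_elim auto
  qed
  also have "\<dots> = integral {0..1} (\<lambda>x. x powr (p-1) * (1-x) powr (q-1))"
    by (rule set_borel_integral_eq_integral(2)[OF I])
  also have "\<dots> = Beta p q" by (rule integral_unique[OF has_integral_Beta_real[OF p q]])
  finally show "(LINT x:{0<..<1}|lborel. x powr (p-1) * (1-x) powr (q-1)) = Beta p q" .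
qed

lemma hs_pow_summable:
  assumes d: "\<delta> > 0" and z: "0 \<le> z" "z < 1"
  shows "summable (\<lambda>j. \<bar>hs \<alpha> \<beta> \<delta> j\<bar> * z^j)"
proof -
  define \<rho> where "\<rho> n = (\<alpha> + real n) * (\<beta> + real n) / ((\<delta> + real n) * (real n + 1))" for n
  define c where "c = (1 + z) / 2"
  have c1: "c < 1" "z < c" using z by (auto simp: c_def)
  have "(\<lambda>n. \<bar>\<rho> n\<bar> * z) \<longlonglongrightarrow> \<bar>1\<bar> * z"
    unfolding \<rho>_def by (intro tendsto_intros ratio_lim)
  then have "\<forall>\<^sub>F n in sequentially. \<bar>\<rho> n\<bar> * z < c" using c1 by (auto dest: order_tendstoD)
  then obtain N where N: "\<And>n. n \<ge> N \<Longrightarrow> \<bar>\<rho> n\<bar> * z < c" by (auto simp: eventually_sequentially)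
  show ?thesis
  proof (rule summable_ratio_test[OF c1(1)])
    fix n assume n: "n \<ge> N"
    have dn: "(\<delta> + real n) * (real n + 1) \<noteq> 0" using d by auto
    have e: "hs \<alpha> \<beta> \<delta> (Suc n) = hs \<alpha> \<beta> \<delta> n * \<rho> n"
      using hs_rec(2)[OF d, of \<alpha> \<beta> n] dn unfolding \<rho>_def by (simp add: eq_divide_eq field_simps)
    have "norm (\<bar>hs \<alpha> \<beta> \<delta> (Suc n)\<bar> * z ^ Suc n) = (\<bar>\<rho> n\<bar> * z) * (\<bar>hs \<alpha> \<beta> \<delta> n\<bar> * z ^ n)"
      using z unfolding e by (simp add: abs_mult)
    also have "\<dots> \<le> c * (\<bar>hs \<alpha> \<beta> \<delta> n\<bar> * z ^ n)"
      using N[OF n] z by (intro mult_right_mono) auto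
    also have "\<dots> = c * norm (\<bar>hs \<alpha> \<beta> \<delta> n\<bar> * z ^ n)" using z by simp
    finally show "norm (\<bar>hs \<alpha> \<beta> \<delta> (Suc n)\<bar> * z ^ Suc n) \<le> c * norm (\<bar>hs \<alpha> \<beta> \<delta> n\<bar> * z ^ n)" .
  qed
qed

lemma hyp2F1_hs: "hyp2F1 \<alpha> \<beta> \<delta> z = (\<Sum>j. hs \<alpha> \<beta> \<delta> j * z^j)"
  unfolding hyp2F1_def hs_def by simp

lemma beta_hs:
  assumes p: "p > 0" and d: "\<delta> > 0"
  shows "hs \<alpha> \<beta> \<delta> j * Beta p (\<delta> + real j) = Gamma p * Gamma \<delta> / Gamma (p + \<delta>) * hs \<alpha> \<beta> (p + \<delta>) j"
proof -
  have nd: "\<delta> \<notin> \<int>\<^sub>\<le>\<^sub>0" "p + \<delta> \<notin> \<int>\<^sub>\<le>\<^sub>0" using p d by (auto elim!: nonpos_Ints_cases)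
  have g1: "Gamma (\<delta> + real j) = pochhammer \<delta> j * Gamma \<delta>"
    using pochhammer_Gamma[OF nd(1), of j] Gamma_nonzero[OF nd(1)] by (simp add: field_simps)
  have g2: "Gamma (p + (\<delta> + real j)) = pochhammer (p + \<delta>) j * Gamma (p + \<delta>)"
    using pochhammer_Gamma[OF nd(2), of j] Gamma_nonzero[OF nd(2)] by (simp add: field_simps add.assoc)
  have pp: "pochhammer \<delta> j > 0" "pochhammer (p + \<delta>) j > 0" using p d by (auto intro: poch_pos)
  have "Gamma (p + \<delta>) \<noteq> 0" by (rule Gamma_nonzero[OF nd(2)])
  then show ?thesis unfolding Beta_def hs_def g1 g2 using pp
    by (simp add: field_simps)
qed

lemma hyp_moment:
  assumes a: "a > 0" and d: "\<delta> > 0" and s: "a + real m + \<delta> - \<alpha> - \<beta> > 0"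
  shows "set_integrable lborel {0<..<1} (\<lambda>x. x^m * hyp2F1 \<alpha> \<beta> \<delta> (1-x) * (x powr (a-1) * (1-x) powr (\<delta>-1)))"
    and "(LINT x:{0<..<1}|lborel. x^m * hyp2F1 \<alpha> \<beta> \<delta> (1-x) * (x powr (a-1) * (1-x) powr (\<delta>-1)))
          = Gamma (a + real m) * Gamma \<delta> / Gamma (a + real m + \<delta>) * FF \<alpha> \<beta> (a + real m + \<delta>)"
proof -
  define p where "p = a + real m"
  have p: "p > 0" using a by (simp add: p_def)
  define \<gamma> where "\<gamma> = p + \<delta>"
  have g: "\<gamma> > 0" "\<gamma> - \<alpha> - \<beta> > 0" using p d s by (auto simp: \<gamma>_def p_def)
  define C where "C = Gamma p * Gamma \<delta> / Gamma \<gamma>"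
  have C0: "C \<ge> 0" using p d g unfolding C_def by (auto intro!: divide_nonneg_pos mult_nonneg_nonneg Gamma_real_pos less_imp_le)
  define B where "B j x = x powr (p-1) * (1-x) powr (\<delta> + real j - 1)" for j and x :: real
  define g where "g j x = hs \<alpha> \<beta> \<delta> j * (indicator {0<..<1} x * B j x)" for j x
  have Bi: "integrable lborel (\<lambda>x. indicator {0<..<1} x * B j x)" for j
    using beta_Ioo(1)[OF p, of "\<delta> + real j"] d unfolding set_integrable_def B_def by simp
  have Bv: "integral\<^sup>L lborel (\<lambda>x. indicator {0<..<1} x * B j x) = Beta p (\<delta> + real j)" for j
    using beta_Ioo(2)[OF p, of "\<delta> + real j"] d unfolding set_lebesgue_integral_def B_def by simp
  have gi: "integrable lborel (g j)" for j unfolding g_def by (intro integrable_mult_right Bi)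
  have gv: "integral\<^sup>L lborel (g j) = C * hs \<alpha> \<beta> \<gamma> j" for j
    unfolding g_def C_def \<gamma>_def using Bv beta_hs[OF p d] by simp
  have B0: "B j x \<ge> 0" for j x unfolding B_def by simp
  have gn: "norm (g j x) = \<bar>hs \<alpha> \<beta> \<delta> j\<bar> * (indicator {0<..<1} x * B j x)" for j x
    unfolding g_def using B0 by (simp add: abs_mult indicator_def)
  have gnv: "(\<integral>x. norm (g j x) \<partial>lborel) = C * \<bar>hs \<alpha> \<beta> \<gamma> j\<bar>" for j
  proof -
    have "(\<integral>x. norm (g j x) \<partial>lborel) = \<bar>hs \<alpha> \<beta> \<delta> j\<bar> * Beta p (\<delta> + real j)"
      unfolding gn using Bv by simp
    also have "\<dots> = \<bar>hs \<alpha> \<beta> \<delta> j * Beta p (\<delta> + real j)\<bar>"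
      using p d by (simp add: abs_mult Beta_def Gamma_real_pos less_imp_le)
    also have "\<dots> = C * \<bar>hs \<alpha> \<beta> \<gamma> j\<bar>" unfolding beta_hs[OF p d] C_def \<gamma>_def
      using Gamma_real_pos[OF p] Gamma_real_pos[OF d] Gamma_real_pos[of "p+\<delta>"] p d
      by (simp add: abs_mult)
    finally show ?thesis .
  qed
  have Bsplit: "B j x = (x powr (p-1) * (1-x) powr (\<delta>-1)) * (1-x)^j" if "x \<in> {0<..<1}" for j x
    using that unfolding B_def by (simp add: powr_add[symmetric] powr_realpow[symmetric] algebra_simps)
  have pw: "x powr (p-1) = x^m * x powr (a-1)" if "x > 0" for x
    using that unfolding p_def by (simp add: powr_add[symmetric] powr_realpow[symmetric] algebra_simps)
  have summ: "summable (\<lambda>j. norm (g j x))" for x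
  proof (cases "x \<in> {0<..<1}")
    case True
    have "summable (\<lambda>j. (x powr (p-1) * (1-x) powr (\<delta>-1)) * (\<bar>hs \<alpha> \<beta> \<delta> j\<bar> * (1-x)^j))"
      using True by (intro summable_mult hs_pow_summable d) auto
    then show ?thesis unfolding gn using True Bsplit by (simp add: algebra_simps)
  next
    case False then show ?thesis unfolding gn by simp
  qed
  have si: "summable (\<lambda>j. \<integral>x. norm (g j x) \<partial>lborel)"
    unfolding gnv by (intro summable_mult hs_summable_lim(1) g)
  have eq: "(\<lambda>x. indicator {0<..<1} x *\<^sub>R (x^m * hyp2F1 \<alpha> \<beta> \<delta> (1-x) * (x powr (a-1) * (1-x) powr (\<delta>-1)))) = (\<lambda>x. \<Sum>j. g j x)"
  proof
    fix x :: real
    show "indicator {0<..<1} x *\<^sub>R (x^m * hyp2F1 \<alpha> \<beta> \<delta> (1-x) * (x powr (a-1) * (1-x) powr (\<delta>-1))) = (\<Sum>j. g j x)"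
    proof (cases "x \<in> {0<..<1}")
      case True
      have sm: "summable (\<lambda>j. hs \<alpha> \<beta> \<delta> j * (1-x)^j)"
      proof (rule summable_rabs_cancel)
        show "summable (\<lambda>j. \<bar>hs \<alpha> \<beta> \<delta> j * (1 - x) ^ j\<bar>)"
          using hs_pow_summable[OF d, of "1-x" \<alpha> \<beta>] True by (simp add: abs_mult)
      qed
      have "(\<Sum>j. g j x) = (\<Sum>j. (x powr (p-1) * (1-x) powr (\<delta>-1)) * (hs \<alpha> \<beta> \<delta> j * (1-x)^j))"
        unfolding g_def using True Bsplit by (simp add: algebra_simps)
      also have "\<dots> = (x powr (p-1) * (1-x) powr (\<delta>-1)) * (\<Sum>j. hs \<alpha> \<beta> \<delta> j * (1-x)^j)"
        by (rule suminf_mult[OF sm])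
      finally show ?thesis using True pw unfolding hyp2F1_hs by (simp add: algebra_simps)
    next
      case False then show ?thesis unfolding g_def by simp
    qed
  qed
  show "set_integrable lborel {0<..<1} (\<lambda>x. x^m * hyp2F1 \<alpha> \<beta> \<delta> (1-x) * (x powr (a-1) * (1-x) powr (\<delta>-1)))"
    unfolding set_integrable_def eq by (rule integrable_suminf[OF gi AE_I2[OF summ] si])
  have "(LINT x:{0<..<1}|lborel. x^m * hyp2F1 \<alpha> \<beta> \<delta> (1-x) * (x powr (a-1) * (1-x) powr (\<delta>-1)))
     = (\<Sum>j. integral\<^sup>L lborel (g j))"
    unfolding set_lebesgue_integral_def eq by (rule integral_suminf[OF gi AE_I2[OF summ] si])
  also have "\<dots> = (\<Sum>j. C * hs \<alpha> \<beta> \<gamma> j)" unfolding gv ..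
  also have "\<dots> = C * FF \<alpha> \<beta> \<gamma>" unfolding FF_def by (rule suminf_mult[OF hs_summable[OF g]])
  finally show "(LINT x:{0<..<1}|lborel. x^m * hyp2F1 \<alpha> \<beta> \<delta> (1-x) * (x powr (a-1) * (1-x) powr (\<delta>-1)))
          = Gamma (a + real m) * Gamma \<delta> / Gamma (a + real m + \<delta>) * FF \<alpha> \<beta> (a + real m + \<delta>)"
    unfolding C_def \<gamma>_def p_def .
qed

lemma gamma_shift: "z \<notin> \<int>\<^sub>\<le>\<^sub>0 \<Longrightarrow> Gamma (z + real n) = pochhammer z n * Gamma (z::real)"
  using pochhammer_Gamma[of z n] Gamma_nonzero[of z] by (simp add: field_simps)

lemma poch_nz: "z \<notin> \<int>\<^sub>\<le>\<^sub>0 \<Longrightarrow> pochhammer (z::real) n \<noteq> 0"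
  using pochhammer_eq_0_imp_nonpos_Int by blast

lemma pos_notnp: "(z::real) > 0 \<Longrightarrow> z \<notin> \<int>\<^sub>\<le>\<^sub>0"
  by (auto elim!: nonpos_Ints_cases)

lemma mom_general:
  fixes a b c d :: real
  assumes a: "a > 0" and b: "b > 0" and dl: "c + d - a - b > 0"
    and c: "c \<notin> \<int>\<^sub>\<le>\<^sub>0" and d: "d \<notin> \<int>\<^sub>\<le>\<^sub>0"
    and e: "e \<le> (1::nat)"
  shows "set_integrable lborel {0<..<1} (\<lambda>x. x^m * hyp2F1 (c-b) (d-b-real e) (c+d-a-b) (1-x) * mu_density a b c d x)"
    and "(LINT x:{0<..<1}|lborel. x^m * hyp2F1 (c-b) (d-b-real e) (c+d-a-b) (1-x) * mu_density a b c d x)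
         = pochhammer a m * pochhammer b (m + e) / (pochhammer c (m + e) * pochhammer d m)"
proof -
  define \<delta> where "\<delta> = c+d-a-b"
  have dp: "\<delta> > 0" using dl by (simp add: \<delta>_def)
  define K where "K = Gamma c * Gamma d / (Gamma a * Gamma b * Gamma \<delta>)"
  have md: "mu_density a b c d x = K * (x powr (a-1) * (1-x) powr (\<delta>-1))" for x
    unfolding mu_density_def K_def \<delta>_def by simp
  have s: "a + real m + \<delta> - (c-b) - (d-b-real e) > 0" using b e by (auto simp: \<delta>_def)
  note HM = hyp_moment[OF a dp s]
  have eqf: "(\<lambda>x. x^m * hyp2F1 (c-b) (d-b-real e) (c+d-a-b) (1-x) * mu_density a b c d x)
     = (\<lambda>x. K * (x^m * hyp2F1 (c-b) (d-b-real e) \<delta> (1-x) * (x powr (a-1) * (1-x) powr (\<delta>-1))))"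
    unfolding md \<delta>_def by (simp add: algebra_simps)
  show "set_integrable lborel {0<..<1} (\<lambda>x. x^m * hyp2F1 (c-b) (d-b-real e) (c+d-a-b) (1-x) * mu_density a b c d x)"
    unfolding eqf using HM(1) by simp
  have G: "FF (c-b) (d-b-real e) (a + real m + \<delta>) = rGamma (d + real m) * rGamma (c + real e + real m) / (rGamma (a + real m + \<delta>) * rGamma (b + real e + real m))"
  proof -
    have g: "a + real m + \<delta> > 0" using a dp by simp
    have e1: "a + real m + \<delta> - (c-b) = d + real m" "a + real m + \<delta> - (d-b-real e) = c + real e + real m"
      "d + real m - (d-b-real e) = b + real e + real m" by (simp_all add: \<delta>_def)
    show ?thesis using gauss[OF g s] unfolding e1 .
  qed
  have ce: "c + real e \<notin> \<int>\<^sub>\<le>\<^sub>0"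
  proof
    assume "c + real e \<in> \<int>\<^sub>\<le>\<^sub>0"
    then obtain n :: nat where "c + real e = - real n" by (elim nonpos_Ints_cases')
    then have "c = - real (n + e)" by simp
    then show False using c minus_of_nat_in_nonpos_Ints by metis
  qed
  have be: "b + real e > 0" using b e by auto
  have gg: "Gamma a > 0" "Gamma b > 0" "Gamma \<delta> > 0" "Gamma (a + real m + \<delta>) > 0" "Gamma (b + real e) > 0"
    using a b dp be by (auto intro!: Gamma_real_pos)
  have gc: "Gamma c \<noteq> 0" "Gamma d \<noteq> 0" "Gamma (c + real e) \<noteq> 0" using c d ce by (auto simp: Gamma_eq_zero_iff)
  have pz: "pochhammer c (m + e) \<noteq> 0" "pochhammer d m \<noteq> 0" using c d by (simp_all add: poch_nz)
  have ebits: "Gamma (b + real e) = pochhammer b (e) * Gamma b" "Gamma (c + real e) = pochhammer c (e) * Gamma c"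
    using e gamma_shift[OF pos_notnp[OF b], of "e"] gamma_shift[OF c, of "e"] by auto
  have pb: "pochhammer b (m + e) = pochhammer b (e) * pochhammer (b + real e) m"
       "pochhammer c (m + e) = pochhammer c (e) * pochhammer (c + real e) m"
    using e pochhammer_product'[of b "e" m] pochhammer_product'[of c "e" m] by (auto simp: add.commute)
  have "(LINT x:{0<..<1}|lborel. x^m * hyp2F1 (c-b) (d-b-real e) (c+d-a-b) (1-x) * mu_density a b c d x)
     = K * (Gamma (a + real m) * Gamma \<delta> / Gamma (a + real m + \<delta>) * FF (c-b) (d-b-real e) (a + real m + \<delta>))"
    unfolding eqf using HM(2) by simp
  also have "\<dots> = K * Gamma (a + real m) * Gamma \<delta> * Gamma (b + real e + real m) / (Gamma (d + real m) * Gamma (c + real e + real m))"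
    unfolding G rGamma_inverse_Gamma using gg by (simp add: field_simps)
  also have "\<dots> = pochhammer a m * pochhammer b (m + e) / (pochhammer c (m + e) * pochhammer d m)"
  proof -
    have ga: "Gamma (a + real m) = pochhammer a m * Gamma a" by (rule gamma_shift[OF pos_notnp[OF a]])
    have gd: "Gamma (d + real m) = pochhammer d m * Gamma d" by (rule gamma_shift[OF d])
    have gb: "Gamma (b + real e + real m) = pochhammer b (m + e) * Gamma b"
      using gamma_shift[OF pos_notnp[OF be], of m] ebits(1) pb(1) by simp
    have gc': "Gamma (c + real e + real m) = pochhammer c (m + e) * Gamma c"
      using gamma_shift[OF ce, of m] ebits(2) pb(2) by simp
    show ?thesis unfolding ga gd gb gc' K_def using gg gc pz by (simp add: field_simps)
  qed
  finally show "(LINT x:{0<..<1}|lborel. x^m * hyp2F1 (c-b) (d-b-real e) (c+d-a-b) (1-x) * mu_density a b c d x)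
         = pochhammer a m * pochhammer b (m + e) / (pochhammer c (m + e) * pochhammer d m)" .
qed



lemma alt_binom_sum: "n > 0 \<Longrightarrow> (\<Sum>k\<le>n. (-1::real)^(n-k) * real (n choose k)) = 0"
  using binomial_ring[of "1::real" "-1" n] by (simp add: mult.commute power_0_left)

lemma fin_diff:
  fixes P :: "real poly"
  assumes "degree P \<le> N"
  shows "(\<Sum>k\<le>N. (-1)^(N-k) * real (N choose k) * poly P (real k)) = fact N * coeff P N"
  using assms
proof (induction N arbitrary: P)
  case 0
  then have "poly P x = coeff P 0" for x by (metis degree_0_id le_zero_eq poly_pCons poly_0 mult_zero_right add.right_neutral)
  then show ?case by simp
next
  case (Suc N)
  obtain a R where P: "P = pCons a R" by (cases P) auto
  have dR: "degree R \<le> N" using Suc.prems P by (cases "R = 0") auto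
  define R' where "R' = pcompose R [:1, 1:]"
  have dR': "degree R' = degree R" unfolding R'_def by (simp add: degree_pcompose)
  have cR': "coeff R' N = coeff R N"
  proof (cases "degree R = N")
    case True
    have "lead_coeff R' = lead_coeff R" unfolding R'_def by (subst lead_coeff_comp) auto
    then show ?thesis using True dR' by simp
  next
    case False
    then show ?thesis using dR dR' by (simp add: coeff_eq_0)
  qed
  have pR': "poly R' (real j) = poly R (real (Suc j))" for j unfolding R'_def
    by (simp add: poly_pcompose)
  have "(\<Sum>k\<le>Suc N. (-1)^(Suc N-k) * real (Suc N choose k) * poly P (real k))
      = a * (\<Sum>k\<le>Suc N. (-1)^(Suc N-k) * real (Suc N choose k))
        + (\<Sum>k\<le>Suc N. (-1)^(Suc N-k) * real (Suc N choose k) * real k * poly R (real k))"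
    unfolding P by (simp add: sum_distrib_left sum.distrib[symmetric] algebra_simps)
  also have "(\<Sum>k\<le>Suc N. (-1::real)^(Suc N-k) * real (Suc N choose k)) = 0"
    by (rule alt_binom_sum) simp
  also have "(\<Sum>k\<le>Suc N. (-1)^(Suc N-k) * real (Suc N choose k) * real k * poly R (real k))
      = (\<Sum>j\<le>N. (-1)^(Suc N - Suc j) * real (Suc N choose Suc j) * real (Suc j) * poly R (real (Suc j)))"
    by (subst sum.atMost_Suc_shift) simp
  also have "\<dots> = real (Suc N) * (\<Sum>j\<le>N. (-1)^(N - j) * real (N choose j) * poly R' (real j))"
  proof -
    have h: "real (Suc N choose Suc j) * real (Suc j) = real (Suc N) * real (N choose j)" for j
      using Suc_times_binomial[of j N] by (metis of_nat_mult mult.commute)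
    have "(-1)^(Suc N - Suc j) * real (Suc N choose Suc j) * real (Suc j) * poly R (real (Suc j))
        = real (Suc N) * ((-1)^(N - j) * real (N choose j) * poly R' (real j))" for j
    proof -
      have "(-1)^(Suc N - Suc j) * real (Suc N choose Suc j) * real (Suc j) * poly R (real (Suc j))
          = (-1)^(N - j) * (real (Suc N choose Suc j) * real (Suc j)) * poly R' (real j)"
        unfolding pR' by simp
      also have "\<dots> = real (Suc N) * ((-1)^(N - j) * real (N choose j) * poly R' (real j))"
        unfolding h by simp
      finally show ?thesis .
    qed
    then show ?thesis unfolding sum_distrib_left by (intro sum.cong) auto
  qed
  also have "\<dots> = real (Suc N) * (fact N * coeff R' N)"
    using Suc.IH[of R'] dR dR' by simp
  finally show ?case using cR' P by simp
qed

definition pp :: "real \<Rightarrow> nat \<Rightarrow> real poly" where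
  "pp u j = (\<Prod>i\<in>{0..<j}. [:u + real i, 1:])"

lemma pp_props:
  shows "poly (pp u j) x = pochhammer (u + x) j"
    and "degree (pp u j) = j"
    and "lead_coeff (pp u j) = 1"
    and "pp u j \<noteq> 0"
proof -
  show "poly (pp u j) x = pochhammer (u + x) j"
    unfolding pp_def poly_prod pochhammer_prod by (intro prod.cong) (auto simp: algebra_simps)
  show "degree (pp u j) = j" unfolding pp_def by (subst degree_prod_sum_eq) auto
  show "lead_coeff (pp u j) = 1" unfolding pp_def lead_coeff_prod by simp
  then show "pp u j \<noteq> 0" by auto
qed

lemma pp_lc: "coeff (pp u j) j = 1"
  using pp_props(2,3)[of u j] by simp

lemma key_sum:
  fixes a b c d :: real
  assumes a: "a > 0" and b: "b > 0" and c: "c \<notin> \<int>\<^sub>\<le>\<^sub>0" and d: "d \<notin> \<int>\<^sub>\<le>\<^sub>0"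
    and pr: "p + r = N" and ie: "i + e \<le> p" and ir: "i \<le> r"
  shows "(\<Sum>k\<le>N. ((-1)^(N-k) / (fact k * fact (N-k)) * (pochhammer c (p+k) * pochhammer d (r+k)) / (pochhammer a k * pochhammer b k))
            * (pochhammer a (k+i) * pochhammer b (k+i+e) / (pochhammer c (k+i+e) * pochhammer d (k+i)))) = 1"
proof -
  define Q where "Q = pp a i * pp b (i+e) * pp (c + real (i+e)) (p-(i+e)) * pp (d + real i) (r-i)"
  have dQ: "degree Q = N" and cQ: "coeff Q N = 1"
  proof -
    have "degree Q = i + (i+e) + (p-(i+e)) + (r-i)"
      unfolding Q_def by (simp add: degree_mult_eq pp_props)
    moreover have "lead_coeff Q = 1"
      unfolding Q_def by (simp only: lead_coeff_mult) (simp add: pp_props pp_lc)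
    ultimately
    show "degree Q = N" "coeff Q N = 1" using pr ie ir by auto
  qed
  have pQ: "poly Q (real k) = pochhammer (a + real k) i * pochhammer (b + real k) (i+e)
       * pochhammer (c + real (k+i+e)) (p-(i+e)) * pochhammer (d + real (k+i)) (r-i)" for k
    unfolding Q_def by (simp add: pp_props algebra_simps)
  have tm: "((-1)^(N-k) / (fact k * fact (N-k)) * (pochhammer c (p+k) * pochhammer d (r+k)) / (pochhammer a k * pochhammer b k))
            * (pochhammer a (k+i) * pochhammer b (k+i+e) / (pochhammer c (k+i+e) * pochhammer d (k+i)))
          = (-1)^(N-k) * real (N choose k) * poly Q (real k) / fact N" if k: "k \<le> N" for k
  proof -
    have e1: "pochhammer a (k+i) = pochhammer a k * pochhammer (a + real k) i" by (rule pochhammer_product')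
    have e2: "pochhammer b (k+i+e) = pochhammer b k * pochhammer (b + real k) (i+e)"
      using pochhammer_product'[of b k "i+e"] by (simp add: add.assoc)
    have e3: "pochhammer c (p+k) = pochhammer c (k+i+e) * pochhammer (c + real (k+i+e)) (p-(i+e))"
      using pochhammer_product'[of c "k+i+e" "p-(i+e)"] ie by (simp add: algebra_simps)
    have e4: "pochhammer d (r+k) = pochhammer d (k+i) * pochhammer (d + real (k+i)) (r-i)"
      using pochhammer_product'[of d "k+i" "r-i"] ir by (simp add: algebra_simps)
    have bf: "real (N choose k) = fact N / (fact k * fact (N-k))" using binomial_fact[OF k] by simp
    have nz: "pochhammer a k > 0" "pochhammer b k > 0" "pochhammer c (k+i+e) \<noteq> 0" "pochhammer d (k+i) \<noteq> 0"
      "(fact N :: real) > 0" "(fact k :: real) > 0" "(fact (N-k) :: real) > 0"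
      using a b c d by (simp_all add: poch_pos poch_nz)
    show ?thesis unfolding e1 e2 e3 e4 bf pQ using nz by (simp add: field_simps)
  qed
  have "(\<Sum>k\<le>N. ((-1)^(N-k) / (fact k * fact (N-k)) * (pochhammer c (p+k) * pochhammer d (r+k)) / (pochhammer a k * pochhammer b k))
            * (pochhammer a (k+i) * pochhammer b (k+i+e) / (pochhammer c (k+i+e) * pochhammer d (k+i))))
      = (\<Sum>k\<le>N. (-1)^(N-k) * real (N choose k) * poly Q (real k)) / fact N"
    unfolding sum_divide_distrib by (intro sum.cong refl) (simp only: atMost_iff tm)
  also have "\<dots> = 1" using fin_diff[of Q N] dQ cQ by simp
  finally show ?thesis .
qed

lemma poly_sum_lt:
  fixes P :: "real poly"
  assumes "degree P < q"
  shows "poly P x = (\<Sum>i<q. coeff P i * x ^ i)"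
proof -
  have "poly P x = (\<Sum>i\<le>degree P. coeff P i * x ^ i)" by (rule poly_altdef)
  also have "\<dots> = (\<Sum>i<q. coeff P i * x ^ i)"
    by (rule sum.mono_neutral_left) (use assms in \<open>auto simp: coeff_eq_0\<close>)
  finally show ?thesis .
qed

lemma lint_lin:
  fixes f :: "nat \<Rightarrow> real \<Rightarrow> real"
  assumes fin: "finite I" and int: "\<And>i. i \<in> I \<Longrightarrow> set_integrable M S (f i)"
  shows "set_integrable M S (\<lambda>x. \<Sum>i\<in>I. c i * f i x)"
    and "(LINT x:S|M. (\<Sum>i\<in>I. c i * f i x)) = (\<Sum>i\<in>I. c i * (LINT x:S|M. f i x))"
proof -
  have e: "(\<lambda>x. indicator S x *\<^sub>R (\<Sum>i\<in>I. c i * f i x)) = (\<lambda>x. \<Sum>i\<in>I. c i * (indicator S x *\<^sub>R f i x))"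
    by (simp add: sum_distrib_left mult.left_commute)
  have ii: "\<And>i. i \<in> I \<Longrightarrow> integrable M (\<lambda>x. c i * (indicator S x *\<^sub>R f i x))"
    using int unfolding set_integrable_def by auto
  show "set_integrable M S (\<lambda>x. \<Sum>i\<in>I. c i * f i x)"
    unfolding set_integrable_def e by (rule Bochner_Integration.integrable_sum) (rule ii)
  show "(LINT x:S|M. (\<Sum>i\<in>I. c i * f i x)) = (\<Sum>i\<in>I. c i * (LINT x:S|M. f i x))"
    unfolding set_lebesgue_integral_def e by (subst Bochner_Integration.integral_sum) (use ii in auto)
qed

lemma hyp2F1_at0: "hyp2F1 \<alpha> \<beta> \<gamma> 0 = 1"
  unfolding hyp2F1_def using powser_zero[of "\<lambda>k. pochhammer \<alpha> k * pochhammer \<beta> k / (pochhammer \<gamma> k * fact k)"]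
  by simp

lemma main_N:
  fixes a b c d :: real
  assumes a: "a > 0" and b: "b > 0" and dl: "c + d - a - b > 0"
    and T: "typeI a b c d N A1 A2"
  shows "poly A1 1 * w1 a b c d 1 + poly A2 1 * w2 a b c d 1
       = 1 / fact N * (pochhammer c ((N+1) div 2 + N) * pochhammer d (N div 2 + N))
            / (pochhammer a N * pochhammer b N)"
proof -
  define p where "p = (N+1) div 2"
  define r where "r = N div 2"
  have pr: "p + r = N" unfolding p_def r_def by simp
  have dA1: "degree A1 < r + 1" using T unfolding typeI_def r_def by simp
  have dA2: "degree A2 < p \<or> A2 = 0" using T unfolding typeI_def p_def
    by (cases "N = 0") (auto split: if_splits)
  define I where "I k = (LINT x:{0<..<1}|lborel. x ^ k * lin_form a b c d A1 A2 x * mu_density a b c d x)" for k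
  have Ik: "\<And>k. k < N \<Longrightarrow> I k = 0" and IN: "I N = 1" using T unfolding typeI_def I_def by auto
  have cd: "c \<notin> \<int>\<^sub>\<le>\<^sub>0 \<and> d \<notin> \<int>\<^sub>\<le>\<^sub>0"
  proof (rule ccontr)
    assume "\<not> (c \<notin> \<int>\<^sub>\<le>\<^sub>0 \<and> d \<notin> \<int>\<^sub>\<le>\<^sub>0)"
    then have "Gamma c * Gamma d = 0" by (auto simp: Gamma_eq_zero_iff)
    then have "\<And>x. mu_density a b c d x = 0" unfolding mu_density_def by simp
    then have "I N = 0" unfolding I_def by simp
    with IN show False by simp
  qed
  then have c: "c \<notin> \<int>\<^sub>\<le>\<^sub>0" and d: "d \<notin> \<int>\<^sub>\<le>\<^sub>0" by auto
  define F where "F e m x = x^m * hyp2F1 (c-b) (d-b-real e) (c+d-a-b) (1-x) * mu_density a b c d x" for e m x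
  define M where "M e m = pochhammer a m * pochhammer b (m+e) / (pochhammer c (m+e) * pochhammer d m)" for e m
  have Fi: "set_integrable lborel {0<..<1} (F e m)" and Fv: "(LINT x:{0<..<1}|lborel. F e m x) = M e m" if "e \<le> 1" for e m
    using mom_general[OF a b dl c d that, of m] unfolding F_def M_def by auto
  define cf where "cf i = (if i \<le> r then coeff A1 i else 0) + (if i < p then c / b * coeff A2 i else 0)" for i
  have poly1: "poly A1 x = (\<Sum>i<r+1. coeff A1 i * x ^ i)" for x by (rule poly_sum_lt[OF dA1])
  have poly2: "poly A2 x = (\<Sum>i<p. coeff A2 i * x ^ i)" for x
    using dA2 by (auto intro: poly_sum_lt)
  have pt: "x ^ k * lin_form a b c d A1 A2 x * mu_density a b c d x
      = (\<Sum>i<r+1. coeff A1 i * F 0 (k+i) x) + (\<Sum>i<p. (c / b * coeff A2 i) * F 1 (k+i) x)" for k x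
    unfolding lin_form_def poly1 poly2 F_def w1_def w2_def
    by (simp add: sum_distrib_left sum_distrib_right sum.distrib[symmetric] power_add algebra_simps sum_divide_distrib)
  have Iform: "I k = (\<Sum>i<r+1. coeff A1 i * M 0 (k+i)) + (\<Sum>i<p. (c / b * coeff A2 i) * M 1 (k+i))" for k
  proof -
    have s1: "set_integrable lborel {0<..<1} (\<lambda>x. \<Sum>i<r+1. coeff A1 i * F 0 (k+i) x)"
      by (rule lint_lin(1)) (auto intro: Fi)
    have s2: "set_integrable lborel {0<..<1} (\<lambda>x. \<Sum>i<p. (c / b * coeff A2 i) * F 1 (k+i) x)"
      by (rule lint_lin(1)) (auto intro: Fi)
    have "I k = (LINT x:{0<..<1}|lborel. (\<Sum>i<r+1. coeff A1 i * F 0 (k+i) x) + (\<Sum>i<p. (c / b * coeff A2 i) * F 1 (k+i) x))"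
      unfolding I_def pt ..
    also have "\<dots> = (LINT x:{0<..<1}|lborel. (\<Sum>i<r+1. coeff A1 i * F 0 (k+i) x)) + (LINT x:{0<..<1}|lborel. (\<Sum>i<p. (c / b * coeff A2 i) * F 1 (k+i) x))"
      by (rule set_integral_add(2)[OF s1 s2])
    also have "\<dots> = (\<Sum>i<r+1. coeff A1 i * M 0 (k+i)) + (\<Sum>i<p. (c / b * coeff A2 i) * M 1 (k+i))"
    proof -
      have "(LINT x:{0<..<1}|lborel. (\<Sum>i<r+1. coeff A1 i * F 0 (k+i) x)) = (\<Sum>i<r+1. coeff A1 i * (LINT x:{0<..<1}|lborel. F 0 (k+i) x))"
        by (rule lint_lin(2)) (auto intro: Fi)
      moreover have "(LINT x:{0<..<1}|lborel. (\<Sum>i<p. (c / b * coeff A2 i) * F 1 (k+i) x)) = (\<Sum>i<p. (c / b * coeff A2 i) * (LINT x:{0<..<1}|lborel. F 1 (k+i) x))"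
        by (rule lint_lin(2)) (auto intro: Fi)
      ultimately show ?thesis by (simp add: Fv)
    qed
    finally show ?thesis .
  qed
  define lam where "lam k = (-1)^(N-k) / (fact k * fact (N-k)) * (pochhammer c (p+k) * pochhammer d (r+k)) / (pochhammer a k * pochhammer b k)" for k
  have ks0: "(\<Sum>k\<le>N. lam k * M 0 (k+i)) = 1" if "i < r + 1" for i
    using key_sum[OF a b c d pr, of i 0] that pr unfolding lam_def M_def p_def r_def by auto
  have ks1: "(\<Sum>k\<le>N. lam k * M 1 (k+i)) = 1" if "i < p" for i
    using key_sum[OF a b c d pr, of i 1] that pr unfolding lam_def M_def p_def r_def by (auto simp: add.assoc)
  have "(\<Sum>k\<le>N. lam k * I k) = lam N"
  proof -
    have "(\<Sum>k\<le>N. lam k * I k) = (\<Sum>k<N. lam k * I k) + lam N * I N"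
      by (simp add: lessThan_Suc_atMost[symmetric])
    then show ?thesis using Ik IN by simp
  qed
  moreover have "(\<Sum>k\<le>N. lam k * I k) = poly A1 1 + c / b * poly A2 1"
  proof -
    have "(\<Sum>k\<le>N. lam k * I k) = (\<Sum>i<r+1. coeff A1 i * (\<Sum>k\<le>N. lam k * M 0 (k+i))) + (\<Sum>i<p. (c / b * coeff A2 i) * (\<Sum>k\<le>N. lam k * M 1 (k+i)))"
      unfolding Iform by (simp add: sum_distrib_left sum_distrib_right sum.distrib algebra_simps sum.swap[of _ "{..N}"])
    also have "\<dots> = (\<Sum>i<r+1. coeff A1 i) + (\<Sum>i<p. c / b * coeff A2 i)"
      using ks0 ks1 by simp
    also have "\<dots> = poly A1 1 + c / b * poly A2 1"
      unfolding poly1 poly2 by (simp add: sum_distrib_left)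
    finally show ?thesis .
  qed
  moreover have "w1 a b c d 1 = 1" "w2 a b c d 1 = c / b" unfolding w1_def w2_def by (simp_all add: hyp2F1_at0)
  ultimately show ?thesis unfolding lam_def p_def r_def by simp
qed


theorem theorem7:
  fixes a b c d :: real
  assumes "a > 0" and "b > 0" and "c + d - a - b > 0"
    and "not_nonpos_int (d - a)" and "not_nonpos_int (d - b)"
    and "not_nonpos_int (c + 1 - a)" and "not_nonpos_int (c - b)"
  shows "\<forall>n::nat. \<forall>A1 A2.
     (typeI a b c d (2 * n) A1 A2 \<longrightarrow>
        poly A1 1 * w1 a b c d 1 + poly A2 1 * w2 a b c d 1
        = 1 / fact (2 * n) * (pochhammer c (3 * n) * pochhammer d (3 * n))
            / (pochhammer a (2 * n) * pochhammer b (2 * n)))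
   \<and> (typeI a b c d (2 * n + 1) A1 A2 \<longrightarrow>
        poly A1 1 * w1 a b c d 1 + poly A2 1 * w2 a b c d 1
        = 1 / fact (2 * n + 1) * (pochhammer c (3 * n + 2) * pochhammer d (3 * n + 1))
            / (pochhammer a (2 * n + 1) * pochhammer b (2 * n + 1)))"
proof (intro allI conjI impI)
  fix n :: nat and A1 A2 :: "real poly"
  assume T: "typeI a b c d (2 * n) A1 A2"
  have e: "(2 * n + 1) div 2 + 2 * n = 3 * n" "2 * n div 2 + 2 * n = 3 * n" by simp_all
  show "poly A1 1 * w1 a b c d 1 + poly A2 1 * w2 a b c d 1
        = 1 / fact (2 * n) * (pochhammer c (3 * n) * pochhammer d (3 * n))
            / (pochhammer a (2 * n) * pochhammer b (2 * n))"
    using main_N[OF assms(1,2,3) T] unfolding e .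
next
  fix n :: nat and A1 A2 :: "real poly"
  assume T: "typeI a b c d (2 * n + 1) A1 A2"
  have e: "(2 * n + 1 + 1) div 2 + (2 * n + 1) = 3 * n + 2" "(2 * n + 1) div 2 + (2 * n + 1) = 3 * n + 1" by simp_all
  show "poly A1 1 * w1 a b c d 1 + poly A2 1 * w2 a b c d 1
        = 1 / fact (2 * n + 1) * (pochhammer c (3 * n + 2) * pochhammer d (3 * n + 1))
            / (pochhammer a (2 * n + 1) * pochhammer b (2 * n + 1))"
    using main_N[OF assms(1,2,3) T] unfolding e .
qed

end
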